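(* Let $\mathbb{F}_q$ be a finite field, $n\geq 1$, and let $k_1,\dots,k_n$ be nonnegative integers. For $A\in Mat_{n\times n}(\mathbb{F}_q[x])$ write $A=\sum_{d\geq 0}A_d x^d$ with $A_d\in Mat_{n\times n}(\mathbb{F}_q)$. Then \[\#\{A=(a_{i,j})\in GL_n(\mathbb{F}_q[x]) : \deg(a_{i,j})\leq k_j \text{ for all } 1\leq i,j\leq n,\ A_0=I_n\}=q^{(n-1)\sum_{1\leq i\leq n}k_i}.\]
   Context: $GL_n(\mathbb{F}_q[x])$ denotes the invertible $n\times n$ matrices over $\mathbb{F}_q[x]$ (determinant a nonzero constant). The zero polynomial is regarded as having degree $\leq k_j$ for every $k_j$. $A_0$ is the constant-term matrix of $A$. *)

theory Defs
  imports "HOL-Analysis.Analysis" "HOL-Computational_Algebra.Polynomial"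
begin

end

theory Submission imports Defs begin

section \<open>Determinant facts\<close>

lemma det_row_combo:
  fixes A :: "'a::comm_ring_1^'n^'n"
  shows "det (\<chi> r. if r = k then (\<Sum>c\<in>UNIV. x c *s row c A) else row r A) = x k * det A"
proof -
  have "det (\<chi> r. if r = k then (\<Sum>c\<in>UNIV. x c *s row c A) else row r A)
      = (\<Sum>c\<in>UNIV. det (\<chi> r. if r = k then x c *s row c A else row r A))"
    by (rule det_linear_row_sum) simp
  also have "\<dots> = (\<Sum>c\<in>UNIV. x c * det (\<chi> r. if r = k then row c A else row r A))"
    by (simp add: det_row_mul)
  also have "\<dots> = (\<Sum>c\<in>UNIV. if c = k then x k * det A else 0)"
  proof (rule sum.cong)
    fix c assume "c \<in> (UNIV::'n set)"
    show "x c * det (\<chi> r. if r = k then row c A else row r A) = (if c = k then x k * det A else 0)"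
    proof (cases "c = k")
      case True
      have "(\<chi> r. if r = k then row c A else row r A) = A"
        using True by (simp add: vec_eq_iff row_def)
      then show ?thesis using True by simp
    next
      case False
      have "det (\<chi> r. if r = k then row c A else row r A) = 0"
        by (rule det_identical_rows[of c k]) (use False in \<open>auto simp: row_def vec_eq_iff\<close>)
      then show ?thesis using False by simp
    qed
  qed simp
  also have "\<dots> = x k * det A" by simp
  finally show ?thesis .
qed

definition adjm :: "'a::comm_ring_1^'n^'n \<Rightarrow> 'a^'n^'n" where
  "adjm A = (\<chi> j k. det (\<chi> r. if r = k then axis j 1 else row r A))"

lemma mult_adjm:
  fixes A :: "'a::comm_ring_1^'n^'n"
  shows "A ** adjm A = (\<chi> i k. if i = k then det A else 0)"
proof -
  have "(A ** adjm A) $ i $ k = (if i = k then det A else 0)" for i k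
  proof -
    have "(A ** adjm A) $ i $ k = (\<Sum>j\<in>UNIV. A$i$j * det (\<chi> r. if r = k then axis j 1 else row r A))"
      by (simp add: matrix_matrix_mult_def adjm_def)
    also have "\<dots> = (\<Sum>j\<in>UNIV. det (\<chi> r. if r = k then A$i$j *s axis j 1 else row r A))"
      by (simp add: det_row_mul)
    also have "\<dots> = det (\<chi> r. if r = k then (\<Sum>j\<in>UNIV. A$i$j *s axis j 1) else row r A)"
      by (rule det_linear_row_sum[symmetric]) simp
    also have "(\<Sum>j\<in>UNIV. A$i$j *s axis j (1::'a)) = (\<Sum>c\<in>UNIV. (if c = i then 1 else 0) *s row c A)"
    proof -
      have "(\<Sum>j\<in>UNIV. A$i$j *s axis j (1::'a)) = row i A"
        by (simp add: vec_eq_iff axis_def row_def sum_component mult_if_delta if_distrib eq_commute cong: if_cong)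
      moreover have "(\<Sum>c\<in>UNIV. (if c = i then 1 else 0) *s row c A) = row i A"
        by (simp add: vec_eq_iff row_def sum_component if_distrib if_distribR cong: if_cong)
      ultimately show ?thesis by simp
    qed
    also have "det (\<chi> r. if r = k then (\<Sum>c\<in>UNIV. (if c = i then 1 else 0) *s row c A) else row r A)
        = (if k = i then 1 else 0) * det A"
      by (rule det_row_combo)
    finally show ?thesis by auto
  qed
  then show ?thesis by (simp add: vec_eq_iff)
qed

lemma det_one_invertible:
  fixes A :: "'a::comm_ring_1^'n^'n"
  assumes "det A = 1"
  shows "invertible A"
proof -
  have R: "A ** adjm A = mat 1"
    using mult_adjm[of A] assms by (simp add: mat_def vec_eq_iff)
  have "transpose A ** adjm (transpose A) = mat 1"
    using mult_adjm[of "transpose A"] assms by (simp add: mat_def vec_eq_iff)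
  then have "transpose (transpose A ** adjm (transpose A)) = mat 1" by simp
  then have L: "transpose (adjm (transpose A)) ** A = mat 1"
    by (simp add: matrix_transpose_mul)
  let ?B = "transpose (adjm (transpose A))"
  have "?B = ?B ** (A ** adjm A)" using R by simp
  also have "\<dots> = adjm A" by (simp add: matrix_mul_assoc L)
  finally have "adjm A ** A = mat 1" using L by simp
  with R show ?thesis unfolding invertible_def by blast
qed

lemma coeff0_det:
  fixes A :: "'a::comm_ring_1 poly^'n^'n"
  shows "coeff (det A) 0 = det (\<chi> i j. coeff (A$i$j) 0)"
  by (simp add: det_def poly_0_coeff_0[symmetric] poly_sum poly_prod)

lemma invertible_det_one:
  fixes A :: "'a::field poly^'n^'n"
  assumes "invertible A" and "(\<chi> i j. coeff (A$i$j) 0) = mat 1"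
  shows "det A = 1"
proof -
  obtain B where "A ** B = mat 1" using assms(1) unfolding invertible_def by blast
  then have "det A * det B = 1" by (metis det_I det_mul)
  then have "det A dvd 1" by (metis dvdI)
  then obtain c where c: "det A = [:c:]" by (auto simp: is_unit_poly_iff)
  have "coeff (det A) 0 = 1" using coeff0_det[of A] assms(2) by simp
  with c show ?thesis by (simp add: one_pCons)
qed


section \<open>Polynomial coefficient facts\<close>

lemma coeff_mult_bound:
  fixes p q :: "'a::comm_semiring_1 poly"
  assumes "degree p \<le> a" "degree q \<le> b"
  shows "coeff (p * q) (a + b) = coeff p a * coeff q b"
proof -
  have "coeff (p * q) (a + b) = (\<Sum>i\<le>a+b. coeff p i * coeff q (a + b - i))"
    by (rule coeff_mult)
  also have "\<dots> = (\<Sum>i\<le>a+b. if i = a then coeff p a * coeff q b else 0)"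
  proof (rule sum.cong)
    fix i assume "i \<in> {..a+b}"
    show "coeff p i * coeff q (a + b - i) = (if i = a then coeff p a * coeff q b else 0)"
    proof (cases "i = a")
      case False
      show ?thesis
      proof (cases "i < a")
        case True
        then have "degree q < a + b - i" using assms by linarith
        then show ?thesis using False by (simp add: coeff_eq_0)
      next
        case False2: False
        then have "degree p < i" using assms \<open>i \<noteq> a\<close> by linarith
        then show ?thesis using False by (simp add: coeff_eq_0)
      qed
    qed simp
  qed simp
  also have "\<dots> = coeff p a * coeff q b" by simp
  finally show ?thesis .
qed

lemma coeff_prod_bound:
  fixes f :: "'b \<Rightarrow> 'a::comm_semiring_1 poly"
  assumes "finite I" "\<And>i. i \<in> I \<Longrightarrow> degree (f i) \<le> d i"
  shows "coeff (prod f I) (sum d I) = (\<Prod>i\<in>I. coeff (f i) (d i))"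
  using assms
proof (induction I rule: finite_induct)
  case empty
  then show ?case by simp
next
  case (insert x F)
  have dF: "degree (prod f F) \<le> sum d F"
  proof -
    have "degree (prod f F) \<le> sum (degree \<circ> f) F" by (rule degree_prod_sum_le) (use insert in auto)
    also have "\<dots> \<le> sum d F" by (rule sum_mono) (use insert in auto)
    finally show ?thesis .
  qed
  have "coeff (prod f (insert x F)) (sum d (insert x F)) = coeff (f x * prod f F) (d x + sum d F)"
    using insert by simp
  also have "\<dots> = coeff (f x) (d x) * coeff (prod f F) (sum d F)"
    by (rule coeff_mult_bound) (use insert dF in auto)
  finally show ?case using insert by simp
qed

lemma coeff_of_int_mult:
  fixes P :: "'a::comm_ring_1 poly"
  shows "coeff (of_int z * P) n = of_int z * coeff P n"
  by (simp add: of_int_poly)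

lemma top_det:
  fixes A :: "'a::comm_ring_1 poly^'n^'n"
  assumes "\<And>i j. degree (A$i$j) \<le> k j"
  shows "coeff (det A) (sum k UNIV) = det (\<chi> i j. coeff (A$i$j) (k j))"
proof -
  have "coeff (det A) (sum k UNIV) =
     (\<Sum>p\<in>{p. p permutes UNIV}. of_int (sign p) * coeff (\<Prod>i\<in>UNIV. A$i$(p i)) (sum k UNIV))"
    by (simp add: det_def coeff_sum coeff_of_int_mult)
  also have "\<dots> = (\<Sum>p\<in>{p. p permutes UNIV}. of_int (sign p) * (\<Prod>i\<in>UNIV. coeff (A$i$(p i)) (k (p i))))"
  proof (rule sum.cong)
    fix p assume "p \<in> {p. p permutes (UNIV::'n set)}"
    then have pp: "p permutes (UNIV::'n set)" by simp
    have "sum k UNIV = sum (k \<circ> p) UNIV"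
      using sum.permute[OF pp, of k] by simp
    also have "\<dots> = (\<Sum>i\<in>UNIV. k (p i))" by simp
    finally have s: "sum k UNIV = (\<Sum>i\<in>UNIV. k (p i))" .
    have "coeff (\<Prod>i\<in>UNIV. A$i$(p i)) (\<Sum>i\<in>UNIV. k (p i)) = (\<Prod>i\<in>UNIV. coeff (A$i$(p i)) (k (p i)))"
      by (rule coeff_prod_bound) (use assms in auto)
    then show "of_int (sign p) * coeff (\<Prod>i\<in>UNIV. A$i$(p i)) (sum k UNIV) =
        of_int (sign p) * (\<Prod>i\<in>UNIV. coeff (A$i$(p i)) (k (p i)))"
      using s by simp
  qed simp
  also have "\<dots> = det (\<chi> i j. coeff (A$i$j) (k j))"
    by (simp add: det_def)
  finally show ?thesis .
qed

lemma finite_deg_le: "finite {p :: 'a::{zero,finite} poly. degree p \<le> d}"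
proof -
  let ?f = "\<lambda>p::'a poly. restrict (coeff p) {..d}"
  have inj: "inj_on ?f {p. degree p \<le> d}"
  proof (rule inj_onI)
    fix p q :: "'a poly"
    assume p: "p \<in> {p. degree p \<le> d}" and q: "q \<in> {p. degree p \<le> d}" and e: "?f p = ?f q"
    show "p = q"
    proof (rule poly_eqI)
      fix n
      show "coeff p n = coeff q n"
      proof (cases "n \<le> d")
        case True
        then show ?thesis using fun_cong[OF e, of n] by simp
      next
        case False
        then show ?thesis using p q by (simp add: coeff_eq_0)
      qed
    qed
  qed
  have "?f ` {p. degree p \<le> d} \<subseteq> PiE {..d} (\<lambda>_. UNIV)"
    by (intro image_subsetI) (simp only: restrict_PiE_iff, simp)
  moreover have "finite (PiE {..d} (\<lambda>_. UNIV :: 'a set))" by (rule finite_PiE) auto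
  ultimately have "finite (?f ` {p. degree p \<le> d})" by (rule finite_subset)
  then show ?thesis using inj by (rule finite_imageD)
qed

lemma finite_vecs:
  assumes "finite F"
  shows "finite {v :: 'b^'n::finite. \<forall>i. v$i \<in> F}"
proof -
  have inj: "inj_on vec_nth {v :: 'b^'n. \<forall>i. v$i \<in> F}"
    by (rule inj_onI) (simp add: vec_eq_iff)
  have "vec_nth ` {v :: 'b^'n. \<forall>i. v$i \<in> F} \<subseteq> PiE UNIV (\<lambda>_. F)" by auto
  moreover have "finite (PiE (UNIV::'n set) (\<lambda>_. F))" by (rule finite_PiE) (use assms in auto)
  ultimately have "finite (vec_nth ` {v :: 'b^'n. \<forall>i. v$i \<in> F})" by (rule finite_subset)
  then show ?thesis using inj by (rule finite_imageD)
qed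

definition Xk :: "('n::finite \<Rightarrow> nat) \<Rightarrow> ('a::{field,finite} poly^'n^'n) set" where
  "Xk k = {A. (\<forall>i j. degree (A$i$j) \<le> k j) \<and> (\<chi> i j. coeff (A$i$j) 0) = mat 1}"

definition Sk :: "('n::finite \<Rightarrow> nat) \<Rightarrow> ('a::{field,finite} poly^'n^'n) set" where
  "Sk k = {A \<in> Xk k. det A = 1}"

definition topm :: "('n::finite \<Rightarrow> nat) \<Rightarrow> 'a::{field,finite} poly^'n^'n \<Rightarrow> 'a^'n^'n" where
  "topm k A = (\<chi> i j. coeff (A$i$j) (k j))"

lemma finite_Xk: "finite (Xk k)"
proof -
  let ?d = "Max (range k)"
  have "Xk k \<subseteq> {A. \<forall>i. A$i \<in> {r. \<forall>j. r$j \<in> {p. degree p \<le> ?d}}}"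
  proof
    fix A assume "A \<in> Xk k"
    then have "degree (A$i$j) \<le> k j" for i j by (simp add: Xk_def)
    moreover have "k j \<le> ?d" for j by (rule Max_ge) auto
    ultimately show "A \<in> {A. \<forall>i. A$i \<in> {r. \<forall>j. r$j \<in> {p. degree p \<le> ?d}}}"
      using le_trans by blast
  qed
  moreover have "finite {A :: 'a poly^'b^'b. \<forall>i. A$i \<in> {r. \<forall>j. r$j \<in> {p. degree p \<le> ?d}}}"
    by (intro finite_vecs finite_deg_le)
  ultimately show ?thesis by (rule finite_subset)
qed

lemma finite_Sk: "finite (Sk k)"
  unfolding Sk_def by (rule finite_subset[OF _ finite_Xk]) auto

lemma Sk_iff:
  "{A :: ('a::{field,finite}) poly ^'n^'n. invertible A \<and> (\<forall>i j. degree (A $ i $ j) \<le> k j) \<and>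
       (\<chi> i j. coeff (A $ i $ j) 0) = mat 1} = Sk k"
  unfolding Sk_def Xk_def using det_one_invertible invertible_det_one by blast


lemma sum_delta_mult: "(\<Sum>c\<in>UNIV. (f c :: 'b::semiring_1) * (if c = b then 1 else 0)) = f (b::'n::finite)"
proof -
  have "(\<Sum>c\<in>UNIV. f c * (if c = b then 1 else 0)) = (\<Sum>c\<in>UNIV. if c = b then f c else 0)"
    by (rule sum.cong) auto
  then show ?thesis by simp
qed

section \<open>Elementary matrices I + u e_j^T\<close>

definition Em :: "'n::finite \<Rightarrow> ('n \<Rightarrow> 'b::comm_ring_1) \<Rightarrow> 'b^'n^'n" where
  "Em j u = (\<chi> a b. (if a = b then 1 else 0) + (if b = j then u a else 0))"

lemma Em_mult_right:
  "(A ** Em j u) $ a $ b = A$a$b + (if b = j then (\<Sum>c\<in>UNIV. A$a$c * u c) else 0)"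
proof -
  have "(A ** Em j u) $ a $ b = (\<Sum>c\<in>UNIV. A$a$c * (if c = b then 1 else 0) + (if b = j then A$a$c * u c else 0))"
    unfolding Em_def matrix_matrix_mult_def by (simp add: distrib_left) (rule sum.cong, auto)
  also have "\<dots> = A$a$b + (if b = j then (\<Sum>c\<in>UNIV. A$a$c * u c) else 0)"
  proof -
    have "(\<Sum>c\<in>UNIV. A$a$c * (if c = b then 1 else 0)) = (\<Sum>c\<in>UNIV. if c = b then A$a$c else 0)"
      by (rule sum.cong) auto
    then show ?thesis by (simp add: sum.distrib)
  qed
  finally show ?thesis .
qed

lemma Em_mult_left:
  "(Em j u ** B) $ a $ b = B$a$b + u a * B$j$b"
proof -
  have "(Em j u ** B) $ a $ b = (\<Sum>c\<in>UNIV. (if a = c then B$c$b else 0) + (if c = j then u a * B$c$b else 0))"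
    unfolding Em_def matrix_matrix_mult_def by (simp add: distrib_right) (rule sum.cong, auto)
  also have "\<dots> = B$a$b + u a * B$j$b"
    by (simp add: sum.distrib)
  finally show ?thesis .
qed

lemma Em_mult_vec:
  "(Em j u *v y) $ a = y$a + u a * y$j"
proof -
  have "(Em j u *v y) $ a = (\<Sum>c\<in>UNIV. (if a = c then y$c else 0) + (if c = j then u a * y$c else 0))"
    unfolding Em_def matrix_vector_mult_def by (simp add: distrib_right) (rule sum.cong, auto)
  also have "\<dots> = y$a + u a * y$j"
    by (simp add: sum.distrib)
  finally show ?thesis .
qed

lemma Em_Em:
  assumes "u' j = 0"
  shows "Em j u ** Em j u' = Em j (\<lambda>a. u a + u' a)"
proof -
  have "(Em j u ** Em j u')$a$b = Em j (\<lambda>a. u a + u' a) $a$b" for a b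
    unfolding Em_mult_left by (cases "b = j") (auto simp: Em_def assms algebra_simps)
  then show ?thesis by (simp add: vec_eq_iff)
qed

lemma Em_zero: "Em j (\<lambda>_. 0) = mat 1"
  by (simp add: Em_def mat_def vec_eq_iff)

lemma det_Em:
  fixes u :: "'n::finite \<Rightarrow> 'b::comm_ring_1"
  assumes "u j = 0"
  shows "det (Em j u) = 1"
proof -
  let ?x = "\<lambda>c. if c = j then 1 else u c"
  have comp: "(\<Sum>c\<in>UNIV. ?x c *s row c (mat 1 :: 'b^'n^'n)) $ b = ?x b" for b
  proof -
    have "(\<Sum>c\<in>UNIV. ?x c *s row c (mat 1 :: 'b^'n^'n)) $ b = (\<Sum>c\<in>UNIV. ?x c * (if c = b then 1 else 0))"
      by (simp add: sum_component row_def mat_def)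
    also have "\<dots> = ?x b" by (rule sum_delta_mult)
    finally show ?thesis .
  qed
  have "transpose (Em j u) = (\<chi> r. if r = j then (\<Sum>c\<in>UNIV. ?x c *s row c (mat 1)) else row r (mat 1))"
  proof -
    have "transpose (Em j u) $ r $ b = (\<chi> r. if r = j then (\<Sum>c\<in>UNIV. ?x c *s row c (mat 1)) else row r (mat 1)) $ r $ b" for r b
    proof (cases "r = j")
      case True
      then show ?thesis using comp[of b] assms by (auto simp: transpose_def Em_def)
    next
      case False
      then show ?thesis by (auto simp: transpose_def Em_def row_def mat_def)
    qed
    then show ?thesis by (simp add: vec_eq_iff)
  qed
  then have "det (transpose (Em j u)) = ?x j * det (mat 1 :: 'b^'n^'n)"
    by (simp add: det_row_combo)
  then show ?thesis by simp
qed

section \<open>The transformation Phi\<close>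

lemma Xk_deg: "A \<in> Xk k \<Longrightarrow> degree (A$a$b) \<le> k b"
  by (simp add: Xk_def)

lemma Xk_coeff0: "A \<in> Xk k \<Longrightarrow> coeff (A$a$b) 0 = (if a = b then 1 else 0)"
proof -
  assume "A \<in> Xk k"
  then have "(\<chi> i j. coeff (A$i$j) 0) $ a $ b = (mat 1 :: 'a^'b^'b) $ a $ b" by (simp add: Xk_def)
  then show ?thesis by (simp add: mat_def)
qed

lemma Xk_I: "(\<And>a b. degree (A$a$b) \<le> k b) \<Longrightarrow> (\<And>a b. coeff (A$a$b) 0 = (if a = b then 1 else 0)) \<Longrightarrow> A \<in> Xk k"
  by (simp add: Xk_def mat_def vec_eq_iff)

definition uu :: "('n::finite \<Rightarrow> nat) \<Rightarrow> 'n \<Rightarrow> 'a::{field,finite}^'n \<Rightarrow> 'n \<Rightarrow> 'a poly" where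
  "uu k j v c = (if c = j then 0 else monom (v$c) (k j - k c))"

definition ww :: "('n::finite \<Rightarrow> nat) \<Rightarrow> 'n \<Rightarrow> 'a::{field,finite}^'n \<Rightarrow> 'n \<Rightarrow> 'a" where
  "ww k j v c = (if c \<noteq> j \<and> k c = k j then v$c else 0)"

definition pb :: "'n::finite \<Rightarrow> 'a::{field,finite}^'n \<Rightarrow> 'n \<Rightarrow> 'a" where
  "pb j v c = (if c = j then 0 else v$c)"

definition Phi :: "('n::finite \<Rightarrow> nat) \<Rightarrow> 'n \<Rightarrow> 'a::{field,finite}^'n \<Rightarrow> 'a poly^'n^'n \<Rightarrow> 'a poly^'n^'n" where
  "Phi k j v A = Em j (\<lambda>c. - [:ww k j v c:]) ** (A ** Em j (uu k j v))"

lemma Phi_entry: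
  "(Phi k j v A)$a$b =
     (A$a$b + (if b = j then (\<Sum>c\<in>UNIV. A$a$c * uu k j v c) else 0))
     - [:ww k j v a:] * (A$j$b + (if b = j then (\<Sum>c\<in>UNIV. A$j$c * uu k j v c) else 0))"
  unfolding Phi_def Em_mult_left Em_mult_right by simp

lemma deg_S:
  assumes A: "A \<in> Xk k" and hv: "\<And>c. v$c \<noteq> 0 \<Longrightarrow> k c \<le> k j"
  shows "degree (\<Sum>c\<in>UNIV. A$a$c * uu k j v c) \<le> k j"
proof (rule degree_sum_le)
  fix c assume "c \<in> (UNIV::'b set)"
  show "degree (A$a$c * uu k j v c) \<le> k j"
  proof (cases "c = j \<or> v$c = 0")
    case True
    then show ?thesis by (auto simp: uu_def)
  next
    case False
    then have "k c \<le> k j" using hv by auto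
    have "degree (A$a$c * uu k j v c) \<le> degree (A$a$c) + degree (uu k j v c)"
      by (rule degree_mult_le)
    also have "\<dots> \<le> k c + (k j - k c)"
      using Xk_deg[OF A, of a c] degree_monom_le[of "v$c" "k j - k c"] False
      by (intro add_mono) (auto simp: uu_def)
    also have "\<dots> = k j" using \<open>k c \<le> k j\<close> by simp
    finally show ?thesis .
  qed
qed simp

lemma coeff0_S:
  assumes A: "A \<in> Xk k" and hv: "\<And>c. v$c \<noteq> 0 \<Longrightarrow> k c \<le> k j"
  shows "coeff (\<Sum>c\<in>UNIV. A$a$c * uu k j v c) 0 = ww k j v a"
proof -
  have "coeff (\<Sum>c\<in>UNIV. A$a$c * uu k j v c) 0 = (\<Sum>c\<in>UNIV. coeff (A$a$c) 0 * coeff (uu k j v c) 0)"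
    by (simp add: coeff_sum coeff_mult_0)
  also have "\<dots> = (\<Sum>c\<in>UNIV. if c = a then coeff (uu k j v c) 0 else 0)"
    by (rule sum.cong) (auto simp: Xk_coeff0[OF A])
  also have "\<dots> = coeff (uu k j v a) 0" by simp
  also have "\<dots> = ww k j v a"
  proof (cases "a = j \<or> v$a = 0")
    case True
    then show ?thesis by (auto simp: uu_def ww_def)
  next
    case False
    then have "k a \<le> k j" using hv by auto
    then show ?thesis using False by (auto simp: uu_def ww_def coeff_monom)
  qed
  finally show ?thesis .
qed

lemma coefftop_S:
  assumes A: "A \<in> Xk k" and hv: "\<And>c. v$c \<noteq> 0 \<Longrightarrow> k c \<le> k j"
  shows "coeff (\<Sum>c\<in>UNIV. A$a$c * uu k j v c) (k j) = (\<Sum>c\<in>UNIV. topm k A $a$c * pb j v c)"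
proof -
  have "coeff (\<Sum>c\<in>UNIV. A$a$c * uu k j v c) (k j) = (\<Sum>c\<in>UNIV. coeff (A$a$c * uu k j v c) (k j))"
    by (simp add: coeff_sum)
  also have "\<dots> = (\<Sum>c\<in>UNIV. topm k A $a$c * pb j v c)"
  proof (rule sum.cong)
    fix c assume "c \<in> (UNIV::'b set)"
    show "coeff (A$a$c * uu k j v c) (k j) = topm k A $a$c * pb j v c"
    proof (cases "c = j \<or> v$c = 0")
      case True
      then show ?thesis by (auto simp: uu_def pb_def)
    next
      case False
      then have kc: "k c \<le> k j" using hv by auto
      have "coeff (A$a$c * uu k j v c) (k j) = coeff (monom (v$c) (k j - k c) * A$a$c) (k j)"
        using False by (simp add: uu_def mult.commute)
      also have "\<dots> = v$c * coeff (A$a$c) (k j - (k j - k c))"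
        by (simp add: coeff_monom_mult)
      also have "\<dots> = v$c * coeff (A$a$c) (k c)" using kc by simp
      finally show ?thesis using False by (simp add: topm_def pb_def mult.commute)
    qed
  qed simp
  finally show ?thesis .
qed

lemma Phi_Xk:
  assumes A: "A \<in> Xk k" and hv: "\<And>c. v$c \<noteq> 0 \<Longrightarrow> k c \<le> k j"
  shows "Phi k j v A \<in> Xk k"
proof (rule Xk_I)
  fix a b
  let ?S = "\<lambda>a. (\<Sum>c\<in>UNIV. A$a$c * uu k j v c)"
  let ?B = "\<lambda>a. A$a$b + (if b = j then ?S a else 0)"
  have dB: "degree (?B a) \<le> k b" for a
  proof (cases "b = j")
    case True
    then show ?thesis using Xk_deg[OF A, of a b] deg_S[OF A hv, where a=a]
      by (auto intro: order.trans[OF degree_add_le])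
  next
    case False
    then show ?thesis using Xk_deg[OF A, of a b] by simp
  qed
  have "degree (?B a - [:ww k j v a:] * ?B j) \<le> k b"
  proof -
    have "degree ([:ww k j v a:] * ?B j) \<le> k b"
      using degree_mult_le[of "[:ww k j v a:]" "?B j"] dB[of j] by simp
    moreover have "degree (?B a - [:ww k j v a:] * ?B j) \<le> max (degree (?B a)) (degree ([:ww k j v a:] * ?B j))"
      by (rule degree_diff_le_max)
    ultimately show ?thesis using dB[of a] by simp
  qed
  then show "degree (Phi k j v A $ a $ b) \<le> k b" by (simp add: Phi_entry)
  have c0: "coeff (?B a) 0 = (if a = b then 1 else 0) + (if b = j then ww k j v a else 0)" for a
    using Xk_coeff0[OF A, of a b] coeff0_S[OF A hv, where a=a] by simp
  have wj: "ww k j v j = 0" by (simp add: ww_def)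
  have "coeff (?B a - [:ww k j v a:] * ?B j) 0 = (if a = b then 1 else 0)"
    using c0[of a] c0[of j] wj by (simp add: coeff_mult_0)
  then show "coeff (Phi k j v A $ a $ b) 0 = (if a = b then 1 else 0)" by (simp add: Phi_entry)
qed

lemma Phi_det: "det (Phi k j v A) = det A"
proof -
  have "det (Phi k j v A) = det (Em j (\<lambda>c. - [:ww k j v c:])) * (det A * det (Em j (uu k j v)))"
    by (simp add: Phi_def det_mul)
  also have "det (Em j (\<lambda>c. - [:ww k j v c:])) = 1" by (rule det_Em) (simp add: ww_def)
  also have "det (Em j (uu k j v)) = 1" by (rule det_Em) (simp add: uu_def)
  finally show ?thesis by simp
qed

lemma Phi_topm:
  assumes A: "A \<in> Xk k" and hv: "\<And>c. v$c \<noteq> 0 \<Longrightarrow> k c \<le> k j"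
  shows "topm k (Phi k j v A) = Em j (\<lambda>c. - ww k j v c) ** (topm k A ** Em j (pb j v))"
proof -
  have "topm k (Phi k j v A) $ a $ b = (Em j (\<lambda>c. - ww k j v c) ** (topm k A ** Em j (pb j v))) $ a $ b" for a b
  proof -
    have e: "coeff (A$a'$b + (if b = j then (\<Sum>c\<in>UNIV. A$a'$c * uu k j v c) else 0)) (k b)
        = (topm k A ** Em j (pb j v)) $ a' $ b" for a'
      using coefftop_S[OF A hv, where a=a'] by (simp add: Em_mult_right topm_def)
    show ?thesis
      unfolding Em_mult_left topm_def[of k "Phi k j v A"]
      using e[of a] e[of j] by (simp add: Phi_entry coeff_mult_0 coeff_diff)
  qed
  then show ?thesis by (simp add: vec_eq_iff)
qed

definition vinv :: "'n::finite \<Rightarrow> 'a::{field,finite}^'n \<Rightarrow> 'a^'n" where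
  "vinv j v = (\<chi> c. if c = j then 1 else - v$c)"

lemma vinv_j: "vinv j v $ j = 1" by (simp add: vinv_def)

lemma vinv_hv:
  fixes k :: "'n::finite \<Rightarrow> nat"
  assumes "\<And>c. v$c \<noteq> 0 \<Longrightarrow> k c \<le> k j" "vinv j v $ c \<noteq> 0"
  shows "k c \<le> k j"
proof (cases "c = j")
  case False
  then show ?thesis using assms by (auto simp: vinv_def)
qed simp

lemma vinv_vinv: "v$j = 1 \<Longrightarrow> vinv j (vinv j v) = v"
  by (auto simp: vinv_def vec_eq_iff)

lemma monom_uminus: "monom (- a) n = - monom (a::'a::comm_ring_1) n"
  by (rule poly_eqI) (simp add: coeff_monom)

lemma Phi_inverse:
  fixes A :: "'a::{field,finite} poly^'n::finite^'n"
  shows "Phi k j (vinv j v) (Phi k j v A) = A"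
proof -
  let ?E1 = "Em j (\<lambda>c. - [:ww k j v c:])" and ?E2 = "Em j (uu k j v)"
  let ?F1 = "Em j (\<lambda>c. - [:ww k j (vinv j v) c:])" and ?F2 = "Em j (uu k j (vinv j v))"
  have e1: "?F1 ** ?E1 = mat 1"
  proof -
    have "?F1 ** ?E1 = Em j (\<lambda>a. - [:ww k j (vinv j v) a:] + - [:ww k j v a:])"
      by (rule Em_Em) (simp add: ww_def)
    also have "(\<lambda>a. - [:ww k j (vinv j v) a:] + - [:ww k j v a:]) = (\<lambda>_. 0)"
      by (auto simp: ww_def vinv_def fun_eq_iff)
    finally show ?thesis by (simp add: Em_zero)
  qed
  have e2: "?E2 ** ?F2 = mat 1"
  proof -
    have "?E2 ** ?F2 = Em j (\<lambda>a. uu k j v a + uu k j (vinv j v) a)"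
      by (rule Em_Em) (simp add: uu_def)
    also have "(\<lambda>a. uu k j v a + uu k j (vinv j v) a) = (\<lambda>_. 0)"
      by (auto simp: uu_def vinv_def fun_eq_iff monom_uminus)
    finally show ?thesis by (simp add: Em_zero)
  qed
  have "Phi k j (vinv j v) (Phi k j v A) = ?F1 ** ((?E1 ** (A ** ?E2)) ** ?F2)"
    by (simp add: Phi_def)
  also have "\<dots> = (?F1 ** ?E1) ** (A ** (?E2 ** ?F2))"
    by (simp add: matrix_mul_assoc)
  also have "\<dots> = A" unfolding e1 e2 by simp
  finally show ?thesis .
qed

lemma Phi_Sk:
  assumes A: "A \<in> Sk k" and hv: "\<And>c. v$c \<noteq> 0 \<Longrightarrow> k c \<le> k j"
  shows "Phi k j v A \<in> Sk k"
proof -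
  have "A \<in> Xk k" using A by (simp add: Sk_def)
  then have "Phi k j v A \<in> Xk k" by (rule Phi_Xk[where A=A and k=k and v=v and j=j, OF _ hv])
  then show ?thesis using A by (simp add: Sk_def Phi_det)
qed

lemma Phi_topv:
  assumes A: "A \<in> Sk k" and hv: "\<And>c. v$c \<noteq> 0 \<Longrightarrow> k c \<le> k j"
  shows "topm k (Phi k j v A) *v y = Em j (\<lambda>c. - ww k j v c) *v (topm k A *v (Em j (pb j v) *v y))"
proof -
  have AX: "A \<in> Xk k" using A by (simp add: Sk_def)
  show ?thesis by (simp add: Phi_topm[where A=A and k=k and v=v and j=j, OF AX hv] matrix_vector_mul_assoc)
qed

lemma Em_w_inj:
  assumes "Em j (\<lambda>c. - ww k j v c) *v z = 0"
  shows "z = 0"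
proof -
  have h: "z$a + - ww k j v a * z$j = 0" for a
    using arg_cong[OF assms, of "\<lambda>x. x $ a"] by (simp add: Em_mult_vec)
  have "z$j = 0" using h[of j] by (simp add: ww_def)
  then show ?thesis using h by (simp add: vec_eq_iff)
qed

lemma Em_pb_fix: "y$j = 0 \<Longrightarrow> Em j (pb j v) *v y = y"
  by (simp add: vec_eq_iff Em_mult_vec)

lemma Em_pb_axis: "v$j = 1 \<Longrightarrow> Em j (pb j v) *v axis j 1 = v"
  by (auto simp: vec_eq_iff Em_mult_vec axis_def pb_def)

lemma Em_pb_vinv: "v$j = 1 \<Longrightarrow> Em j (pb j (vinv j v)) *v v = axis j 1"
  by (auto simp: vec_eq_iff Em_mult_vec axis_def pb_def vinv_def)

section \<open>Independence and the counting sets\<close>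

definition indep_on :: "'a::field^'n::finite^'n \<Rightarrow> 'n set \<Rightarrow> bool" where
  "indep_on M S \<longleftrightarrow> (\<forall>y. (\<forall>m. m \<notin> S \<longrightarrow> y$m = 0) \<longrightarrow> M *v y = 0 \<longrightarrow> y = 0)"

definition Hs :: "('n::finite \<Rightarrow> nat) \<Rightarrow> 'n set \<Rightarrow> ('a::{field,finite} poly^'n^'n) set" where
  "Hs k S = {A \<in> Sk k. indep_on (topm k A) S}"

definition Ts :: "('n::finite \<Rightarrow> nat) \<Rightarrow> 'n set \<Rightarrow> 'a::{field,finite}^'n \<Rightarrow> ('a poly^'n^'n) set" where
  "Ts k S v = {A \<in> Sk k. indep_on (topm k A) S \<and> topm k A *v v = 0}"

lemma Ts_to_axis:
  assumes A: "A \<in> Ts k S v" and vj: "v$j = 1" and hv: "\<And>c. v$c \<noteq> 0 \<Longrightarrow> k c \<le> k j" and jS: "j \<notin> S"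
  shows "Phi k j v A \<in> Ts k S (axis j 1)"
proof -
  have ASk: "A \<in> Sk k" and ind: "indep_on (topm k A) S" and kv: "topm k A *v v = 0"
    using A by (auto simp: Ts_def)
  have "indep_on (topm k (Phi k j v A)) S"
    unfolding indep_on_def
  proof (intro allI impI)
    fix y :: "'a^'b" assume ys: "\<forall>m. m \<notin> S \<longrightarrow> y$m = 0" and z: "topm k (Phi k j v A) *v y = 0"
    have "y$j = 0" using ys jS by auto
    then have "topm k (Phi k j v A) *v y = Em j (\<lambda>c. - ww k j v c) *v (topm k A *v y)"
      by (simp add: Phi_topv[where A=A and k=k and v=v and j=j, OF ASk hv] Em_pb_fix)
    then have "topm k A *v y = 0" using z Em_w_inj by metis
    then show "y = 0" using ind ys by (auto simp: indep_on_def)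
  qed
  moreover have "topm k (Phi k j v A) *v axis j 1 = 0"
    by (simp add: Phi_topv[where A=A and k=k and v=v and j=j, OF ASk hv] Em_pb_axis[OF vj] kv)
  ultimately show ?thesis using Phi_Sk[where A=A and k=k and v=v and j=j, OF ASk hv] by (simp add: Ts_def)
qed

lemma Ts_from_axis:
  assumes A: "A \<in> Ts k S (axis j 1)" and vj: "v$j = 1" and hv: "\<And>c. v$c \<noteq> 0 \<Longrightarrow> k c \<le> k j" and jS: "j \<notin> S"
  shows "Phi k j (vinv j v) A \<in> Ts k S v"
proof -
  have hv': "\<And>c. vinv j v $ c \<noteq> 0 \<Longrightarrow> k c \<le> k j"
  proof -
    fix c assume "vinv j v $ c \<noteq> 0"
    then show "k c \<le> k j" using hv by (cases "c = j") (auto simp: vinv_def)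
  qed
  have ASk: "A \<in> Sk k" and ind: "indep_on (topm k A) S" and kv: "topm k A *v axis j 1 = 0"
    using A by (auto simp: Ts_def)
  have "indep_on (topm k (Phi k j (vinv j v) A)) S"
    unfolding indep_on_def
  proof (intro allI impI)
    fix y :: "'a^'b" assume ys: "\<forall>m. m \<notin> S \<longrightarrow> y$m = 0" and z: "topm k (Phi k j (vinv j v) A) *v y = 0"
    have "y$j = 0" using ys jS by auto
    then have "topm k (Phi k j (vinv j v) A) *v y = Em j (\<lambda>c. - ww k j (vinv j v) c) *v (topm k A *v y)"
      by (simp add: Phi_topv[where A=A and k=k and v="vinv j v" and j=j, OF ASk hv'] Em_pb_fix)
    then have "topm k A *v y = 0" using z Em_w_inj by metis
    then show "y = 0" using ind ys by (auto simp: indep_on_def)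
  qed
  moreover have "topm k (Phi k j (vinv j v) A) *v v = 0"
    by (simp add: Phi_topv[where A=A and k=k and v="vinv j v" and j=j, OF ASk hv'] Em_pb_vinv[OF vj] kv)
  ultimately show ?thesis using Phi_Sk[where A=A and k=k and v="vinv j v" and j=j, OF ASk hv'] by (simp add: Ts_def)
qed

lemma card_Ts:
  fixes v :: "'a::{field,finite}^'n::finite"
  assumes vj: "v$j = 1" and hv: "\<And>c. v$c \<noteq> 0 \<Longrightarrow> k c \<le> k j" and jS: "j \<notin> S"
  shows "card (Ts k S v) = card (Ts k S (axis j (1::'a)))"
proof -
  have "bij_betw (Phi k j v) (Ts k S v) (Ts k S (axis j 1))"
  proof (rule bij_betw_byWitness[where f' = "Phi k j (vinv j v)"])
    show "Phi k j v ` Ts k S v \<subseteq> Ts k S (axis j 1)"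
    proof
      fix B assume "B \<in> Phi k j v ` Ts k S v"
      then obtain A where A: "A \<in> Ts k S v" and B: "B = Phi k j v A" by blast
      show "B \<in> Ts k S (axis j 1)" unfolding B
        by (rule Ts_to_axis[where A=A and k=k and S=S and v=v and j=j, OF A vj hv jS])
    qed
    show "Phi k j (vinv j v) ` Ts k S (axis j 1) \<subseteq> Ts k S v"
    proof
      fix B assume "B \<in> Phi k j (vinv j v) ` Ts k S (axis j 1)"
      then obtain A where A: "A \<in> Ts k S (axis j 1)" and B: "B = Phi k j (vinv j v) A" by blast
      show "B \<in> Ts k S v" unfolding B
        by (rule Ts_from_axis[where A=A and k=k and S=S and v=v and j=j, OF A vj hv jS])
    qed
    show "\<forall>a\<in>Ts k S v. Phi k j (vinv j v) (Phi k j v a) = a" by (simp add: Phi_inverse)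
    show "\<forall>a\<in>Ts k S (axis j 1). Phi k j v (Phi k j (vinv j v) a) = a"
      using Phi_inverse[of k j "vinv j v"] by (simp add: vinv_vinv[OF vj])
  qed
  then show ?thesis by (rule bij_betw_same_card)
qed

lemma mv_scale: "M *v (c *s y) = c *s (M *v y)" for M :: "'a::comm_ring_1^'n::finite^'m"
  by (simp add: vec_eq_iff matrix_vector_mult_def sum_distrib_left mult_ac)

lemma indep_mono: "S \<subseteq> S' \<Longrightarrow> indep_on M S' \<Longrightarrow> indep_on M S"
  unfolding indep_on_def by blast

lemma card_V:
  assumes jS: "j \<notin> S"
  shows "card {v :: 'a::{zero,one,finite}^'n::finite. v$j = 1 \<and> (\<forall>m. m \<notin> insert j S \<longrightarrow> v$m = 0)} = CARD('a) ^ card S"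
proof -
  let ?V = "{v :: 'a^'n. v$j = 1 \<and> (\<forall>m. m \<notin> insert j S \<longrightarrow> v$m = 0)}"
  let ?P = "PiE S (\<lambda>_. UNIV :: 'a set)"
  let ?f = "\<lambda>v::'a^'n. restrict (vec_nth v) S"
  let ?g = "\<lambda>f. (\<chi> m. if m = j then 1 else if m \<in> S then f m else 0) :: 'a^'n"
  have "bij_betw ?f ?V ?P"
  proof (rule bij_betw_byWitness[where f' = ?g])
    show "\<forall>a\<in>?V. ?g (?f a) = a" by (auto simp: vec_eq_iff)
    show "\<forall>a\<in>?P. ?f (?g a) = a"
    proof
      fix a assume a: "a \<in> ?P"
      show "?f (?g a) = a"
      proof (rule ext)
        fix m show "?f (?g a) m = a m"
          using a jS by (cases "m \<in> S") (auto simp: PiE_def extensional_def)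
      qed
    qed
    show "?f ` ?V \<subseteq> ?P" by auto
    show "?g ` ?P \<subseteq> ?V" using jS by auto
  qed
  then have "card ?V = card ?P" by (rule bij_betw_same_card)
  also have "\<dots> = CARD('a) ^ card S"
    by (simp add: card_PiE)
  finally show ?thesis .
qed

lemma Hs_rec:
  fixes k :: "'n::finite \<Rightarrow> nat"
  assumes jS: "j \<notin> S" and hmax: "\<And>m. m \<in> S \<Longrightarrow> k m \<le> k j"
  shows "card (Hs k S :: ('a::{field,finite} poly^'n^'n) set)
       = card (Hs k (insert j S) :: ('a poly^'n^'n) set) + CARD('a) ^ card S * card (Ts k S (axis j (1::'a)))"
proof -
  let ?D = "{A \<in> Sk k. indep_on (topm k A) S \<and> \<not> indep_on (topm k A) (insert j S)} :: ('a poly^'n^'n) set"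
  let ?V = "{v :: 'a^'n. v$j = 1 \<and> (\<forall>m. m \<notin> insert j S \<longrightarrow> v$m = 0)}"
  have finV: "finite ?V" by simp
  have split: "Hs k S = Hs k (insert j S) \<union> ?D"
    unfolding Hs_def using indep_mono[of S "insert j S"] by auto
  have fin1: "finite (Hs k (insert j S) :: ('a poly^'n^'n) set)"
    by (rule finite_subset[OF _ finite_Sk[of k]]) (auto simp: Hs_def)
  have fin2: "finite ?D" by (rule finite_subset[OF _ finite_Sk[of k]]) auto
  have disj: "Hs k (insert j S) \<inter> ?D = {}" by (auto simp: Hs_def)
  have c1: "card (Hs k S :: ('a poly^'n^'n) set) = card (Hs k (insert j S) :: ('a poly^'n^'n) set) + card ?D"
    unfolding split by (rule card_Un_disjoint[OF fin1 fin2 disj])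
  have DU: "?D = (\<Union>v\<in>?V. Ts k S v)"
  proof
    show "?D \<subseteq> (\<Union>v\<in>?V. Ts k S v)"
    proof
      fix A assume A: "A \<in> ?D"
      then obtain y where ys: "\<forall>m. m \<notin> insert j S \<longrightarrow> y$m = 0" and my: "topm k A *v y = 0" and yn: "y \<noteq> 0"
        unfolding indep_on_def by blast
      have "y$j \<noteq> 0"
      proof
        assume "y$j = 0"
        then have "\<forall>m. m \<notin> S \<longrightarrow> y$m = 0" using ys by auto
        then show False using A my yn unfolding indep_on_def by blast
      qed
      let ?v = "inverse (y$j) *s y"
      have "?v \<in> ?V" using ys \<open>y$j \<noteq> 0\<close> by auto
      moreover have "topm k A *v ?v = 0" by (simp add: mv_scale my)
      ultimately have "A \<in> Ts k S ?v" using A by (simp add: Ts_def)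
      then show "A \<in> (\<Union>v\<in>?V. Ts k S v)" using \<open>?v \<in> ?V\<close> by blast
    qed
    show "(\<Union>v\<in>?V. Ts k S v) \<subseteq> ?D"
    proof
      fix A assume "A \<in> (\<Union>v\<in>?V. Ts k S v)"
      then obtain v where v: "v \<in> ?V" and A: "A \<in> Ts k S v" by blast
      have "v$j \<noteq> 0" using v by simp
      then have "v \<noteq> 0" by auto
      then have "\<not> indep_on (topm k A) (insert j S)"
        using v A unfolding indep_on_def Ts_def by blast
      then show "A \<in> ?D" using A by (auto simp: Ts_def)
    qed
  qed
  have "card ?D = (\<Sum>v\<in>?V. card (Ts k S v))"
    unfolding DU
  proof (rule card_UN_disjoint[OF finV])
    show "\<forall>v\<in>?V. finite (Ts k S v)"
      by (auto intro: finite_subset[OF _ finite_Sk[of k]] simp: Ts_def)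
    show "\<forall>v\<in>?V. \<forall>v'\<in>?V. v \<noteq> v' \<longrightarrow> Ts k S v \<inter> Ts k S v' = {}"
    proof (intro ballI impI)
      fix v v' assume v: "v \<in> ?V" and v': "v' \<in> ?V" and ne: "v \<noteq> v'"
      show "Ts k S v \<inter> Ts k S v' = {}"
      proof (rule ccontr)
        assume "Ts k S v \<inter> Ts k S v' \<noteq> {}"
        then obtain A where A1: "A \<in> Ts k S v" and A2: "A \<in> Ts k S v'" by blast
        have "topm k A *v (v - v') = 0"
          using A1 A2 by (simp add: Ts_def matrix_vector_mult_diff_distrib)
        moreover have "\<forall>m. m \<notin> S \<longrightarrow> (v - v')$m = 0"
        proof (intro allI impI)
          fix m assume "m \<notin> S"
          then show "(v - v')$m = 0" using v v' by (cases "m = j") auto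
        qed
        ultimately have "v - v' = 0" using A1 unfolding Ts_def indep_on_def by blast
        then show False using ne by simp
      qed
    qed
  qed
  also have "\<dots> = (\<Sum>v\<in>?V. card (Ts k S (axis j (1::'a))))"
  proof (rule sum.cong)
    fix v assume v: "v \<in> ?V"
    show "card (Ts k S v) = card (Ts k S (axis j (1::'a)))"
    proof (rule card_Ts)
      show "v$j = 1" using v by simp
      show "j \<notin> S" by (rule jS)
      fix c assume "v$c \<noteq> 0"
      then have "c \<in> insert j S" using v by blast
      then show "k c \<le> k j" using hmax by auto
    qed
  qed simp
  also have "\<dots> = card ?V * card (Ts k S (axis j (1::'a)))"
    by simp
  also have "card ?V = CARD('a) ^ card S" by (rule card_V[OF jS])
  finally show ?thesis using c1 by simp
qed

lemma topm_agree:
  assumes "y$j = 0"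
  shows "topm k A *v y = topm (k(j := d)) A *v y"
proof -
  have "(topm k A *v y)$i = (topm (k(j := d)) A *v y)$i" for i
    unfolding matrix_vector_mult_def topm_def
    by (simp, rule sum.cong) (use assms in auto)
  then show ?thesis by (simp add: vec_eq_iff)
qed

lemma Ts_axis_zero:
  fixes k :: "'n::finite \<Rightarrow> nat"
  assumes "k j = 0"
  shows "Ts k S (axis j (1::'a::{field,finite})) = {}"
proof -
  have "topm k A *v axis j 1 \<noteq> 0" if A: "A \<in> Sk k" for A :: "'a poly^'n^'n"
  proof -
    have AX: "A \<in> Xk k" using A by (simp add: Sk_def)
    have "(topm k A *v axis j 1) $ j = topm k A $ j $ j"
      unfolding matrix_vector_mult_def axis_def
      by (simp add: if_distrib cong: if_cong)
    also have "\<dots> = 1" using Xk_coeff0[OF AX, of j j] assms by (simp add: topm_def)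
    finally show ?thesis by auto
  qed
  then show ?thesis by (auto simp: Ts_def)
qed

lemma Ts_axis_dec:
  fixes k :: "'n::finite \<Rightarrow> nat"
  assumes kj: "0 < k j" and jS: "j \<notin> S"
  shows "Ts k S (axis j (1::'a::{field,finite})) = Hs (k(j := k j - 1)) S"
proof -
  let ?k' = "k(j := k j - 1)"
  have indeq: "indep_on (topm k A) S \<longleftrightarrow> indep_on (topm ?k' A) S" for A :: "'a poly^'n^'n"
  proof -
    have "topm k A *v y = topm ?k' A *v y" if "\<forall>m. m \<notin> S \<longrightarrow> y$m = 0" for y
      using that jS by (intro topm_agree) auto
    then show ?thesis unfolding indep_on_def by metis
  qed
  have "A \<in> Ts k S (axis j 1) \<longleftrightarrow> A \<in> Hs ?k' S" for A :: "'a poly^'n^'n"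
  proof
    assume A: "A \<in> Ts k S (axis j 1)"
    then have ASk: "A \<in> Sk k" and ind: "indep_on (topm k A) S" and z: "topm k A *v axis j 1 = 0"
      by (auto simp: Ts_def)
    have AX: "A \<in> Xk k" using ASk by (simp add: Sk_def)
    have ctop: "coeff (A$i$j) (k j) = 0" for i
    proof -
      have "(topm k A *v axis j 1) $ i = topm k A $ i $ j"
        unfolding matrix_vector_mult_def axis_def
        by (simp add: if_distrib cong: if_cong)
      then show ?thesis using z by (simp add: topm_def)
    qed
    have "A \<in> Xk ?k'"
    proof (rule Xk_I)
      fix a b
      show "degree (A$a$b) \<le> ?k' b"
      proof (cases "b = j")
        case True
        have "degree (A$a$j) \<le> k j - 1"
        proof (rule degree_le, intro allI impI)
          fix i assume "k j - 1 < i"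
          then have "i = k j \<or> k j < i" by linarith
          then show "coeff (A$a$j) i = 0"
            using ctop[of a] Xk_deg[OF AX, of a j] by (auto simp: coeff_eq_0)
        qed
        then show ?thesis using True by simp
      next
        case False
        then show ?thesis using Xk_deg[OF AX, of a b] by simp
      qed
      show "coeff (A$a$b) 0 = (if a = b then 1 else 0)" by (rule Xk_coeff0[OF AX])
    qed
    then show "A \<in> Hs ?k' S" using ASk ind indeq by (simp add: Hs_def Sk_def)
  next
    assume A: "A \<in> Hs ?k' S"
    then have AX': "A \<in> Xk ?k'" and d: "det A = 1" and ind: "indep_on (topm ?k' A) S"
      by (auto simp: Hs_def Sk_def)
    have AX: "A \<in> Xk k"
    proof (rule Xk_I)
      fix a b
      show "degree (A$a$b) \<le> k b"
        using Xk_deg[OF AX', of a b] by (cases "b = j") auto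
      show "coeff (A$a$b) 0 = (if a = b then 1 else 0)" by (rule Xk_coeff0[OF AX'])
    qed
    have "topm k A *v axis j 1 = 0"
    proof -
      have "(topm k A *v axis j 1) $ i = 0" for i
      proof -
        have "(topm k A *v axis j 1) $ i = topm k A $ i $ j"
          unfolding matrix_vector_mult_def axis_def
          by (simp add: if_distrib cong: if_cong)
        also have "\<dots> = coeff (A$i$j) (k j)" by (simp add: topm_def)
        also have "\<dots> = 0"
        proof (rule coeff_eq_0)
          show "degree (A$i$j) < k j" using Xk_deg[OF AX', of i j] kj by simp
        qed
        finally show ?thesis .
      qed
      then show ?thesis by (simp add: vec_eq_iff)
    qed
    then show "A \<in> Ts k S (axis j 1)" using AX d ind indeq by (simp add: Ts_def Sk_def)
  qed
  then show ?thesis by blast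
qed

lemma Hs_empty: "Hs k {} = Sk k"
  by (auto simp: Hs_def indep_on_def vec_eq_iff)

lemma indep_UNIV_det:
  fixes M :: "'a::field^'n::finite^'n"
  assumes "indep_on M UNIV"
  shows "det M \<noteq> 0"
proof -
  have "inj ((*v) M)"
  proof (rule injI)
    fix x y assume "M *v x = M *v y"
    then have "M *v (x - y) = 0" by (simp add: matrix_vector_mult_diff_distrib)
    then have "x - y = 0" using assms by (auto simp: indep_on_def)
    then show "x = y" by simp
  qed
  then have "det (matrix ((*v) M)) \<noteq> 0"
    using det_nz_iff_inj_gen[of "(*v) M"] matrix_vector_mul_linear_gen by blast
  then show ?thesis by simp
qed

lemma Hs_UNIV:
  fixes k :: "'n::finite \<Rightarrow> nat"
  assumes "0 < sum k UNIV"
  shows "Hs k UNIV = ({} :: ('a::{field,finite} poly^'n^'n) set)"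
proof -
  have "\<not> indep_on (topm k A) UNIV" if A: "A \<in> Sk k" for A :: "'a poly^'n^'n"
  proof -
    have AX: "A \<in> Xk k" using A by (simp add: Sk_def)
    have "det (topm k A) = coeff (det A) (sum k UNIV)"
      unfolding topm_def by (rule top_det[symmetric]) (rule Xk_deg[OF AX])
    also have "\<dots> = 0"
    proof -
      obtain K' where K: "sum k UNIV = Suc K'" using assms by (cases "sum k UNIV") auto
      have "det A = 1" using A by (simp add: Sk_def)
      then show ?thesis unfolding K by (simp add: one_pCons)
    qed
    finally show ?thesis using indep_UNIV_det by blast
  qed
  then show ?thesis by (auto simp: Hs_def)
qed

lemma Sk_zero:
  fixes k :: "'n::finite \<Rightarrow> nat"
  assumes "\<And>j. k j = 0"
  shows "Sk k = {mat 1 :: 'a::{field,finite} poly^'n^'n}"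
proof
  show "Sk k \<subseteq> {mat 1 :: 'a poly^'n^'n}"
  proof
    fix A :: "'a poly^'n^'n" assume A: "A \<in> Sk k"
    then have AX: "A \<in> Xk k" by (simp add: Sk_def)
    have "A$a$b = (mat 1 :: 'a poly^'n^'n)$a$b" for a b
    proof -
      have "degree (A$a$b) = 0" using Xk_deg[OF AX, of a b] assms by simp
      then have "A$a$b = [:coeff (A$a$b) 0:]" by (rule degree_0_id[symmetric])
      then show ?thesis using Xk_coeff0[OF AX, of a b] by (simp add: mat_def)
    qed
    then show "A \<in> {mat 1}" by (simp add: vec_eq_iff)
  qed
  show "{mat 1 :: 'a poly^'n^'n} \<subseteq> Sk k"
  proof -
    have "(mat 1 :: 'a poly^'n^'n) \<in> Xk k"
      by (rule Xk_I) (simp_all add: mat_def)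
    then show ?thesis by (simp add: Sk_def)
  qed
qed

section \<open>The counting argument\<close>

definition qprd :: "real \<Rightarrow> nat \<Rightarrow> nat \<Rightarrow> nat \<Rightarrow> real" where
  "qprd q N s z = (\<Prod>u<s. 1 - q ^ (u + z) / q ^ (N - 1))"

lemma qprd_0: "qprd q N 0 z = 1" by (simp add: qprd_def)

lemma qprd_Suc: "qprd q N (Suc s) z = qprd q N s z * (1 - q ^ (s + z) / q ^ (N - 1))"
  by (simp add: qprd_def)

lemma qprd_full:
  assumes "0 < s" "s + z = N" "q \<noteq> 0"
  shows "qprd q N s z = 0"
proof -
  obtain s' where s: "s = Suc s'" using assms by (cases s) auto
  have "s' + z = N - 1" using assms s by simp
  then show ?thesis unfolding s qprd_Suc using assms by simp
qed

lemma card_split_pos: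
  fixes k :: "'n::finite \<Rightarrow> nat"
  shows "card S = card (S \<inter> {m. 0 < k m}) + card (S \<inter> {m. k m = 0})"
proof -
  have "S = (S \<inter> {m. 0 < k m}) \<union> (S \<inter> {m. k m = 0})" by auto
  moreover have "card ((S \<inter> {m. 0 < k m}) \<union> (S \<inter> {m. k m = 0})) = card (S \<inter> {m. 0 < k m}) + card (S \<inter> {m. k m = 0})"
    by (rule card_Un_disjoint) auto
  ultimately show ?thesis by simp
qed

lemma count_step:
  fixes k :: "'n::finite \<Rightarrow> nat"
  defines "q \<equiv> real CARD('a::{field,finite})"
  assumes IH: "\<And>k' S. sum k' UNIV < sum k UNIV \<Longrightarrow>
     real (card (Hs k' S :: ('a poly^'n^'n) set)) =
       q ^ ((CARD('n) - 1) * sum k' UNIV) * qprd q CARD('n) (card (S \<inter> {m. 0 < k' m})) (card (S \<inter> {m. k' m = 0}))"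
  shows "real (card (Hs k S :: ('a poly^'n^'n) set)) =
       q ^ ((CARD('n) - 1) * sum k UNIV) * qprd q CARD('n) (card (S \<inter> {m. 0 < k m})) (card (S \<inter> {m. k m = 0}))"
proof -
  let ?N = "CARD('n)"
  let ?K = "sum k UNIV"
  let ?X = "real (card (Hs k {} :: ('a poly^'n^'n) set))"
  let ?c = "q ^ ((?N - 1) * ?K)"
  let ?sp = "\<lambda>S. card (S \<inter> {m. 0 < k m})"
  let ?sz = "\<lambda>S. card (S \<inter> {m. k m = 0})"
  have qpos: "q > 0" unfolding q_def by simp
  have A: "real (card (Hs k S :: ('a poly^'n^'n) set)) = ?X - ?c * (1 - qprd q ?N (?sp S) (?sz S))" for S
  proof (induction "card S" arbitrary: S rule: less_induct)
    case less
    show ?case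
    proof (cases "S = {}")
      case True
      then show ?thesis by (simp add: qprd_0)
    next
      case False
      have finS: "finite S" by simp
      obtain j where jS: "j \<in> S" and jmax: "\<And>m. m \<in> S \<Longrightarrow> k m \<le> k j"
      proof -
        have "Max (k ` S) \<in> k ` S" using False finS by (intro Max_in) auto
        then obtain j where "j \<in> S" "k j = Max (k ` S)" by auto
        moreover have "k m \<le> Max (k ` S)" if "m \<in> S" for m using that finS by (intro Max_ge) auto
        ultimately show ?thesis using that by auto
      qed
      let ?S' = "S - {j}"
      have S: "S = insert j ?S'" using jS by auto
      have jS': "j \<notin> ?S'" by simp
      have "card S > 0" using jS finS card_gt_0_iff by blast
      then have lt: "card ?S' < card S" using jS finS by simp
      have IHc: "real (card (Hs k ?S' :: ('a poly^'n^'n) set)) = ?X - ?c * (1 - qprd q ?N (?sp ?S') (?sz ?S'))"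
        using less lt by blast
      have rec: "card (Hs k ?S' :: ('a poly^'n^'n) set) = card (Hs k S :: ('a poly^'n^'n) set)
           + CARD('a) ^ card ?S' * card (Ts k ?S' (axis j (1::'a)))"
        using Hs_rec[of j ?S' k, where 'a='a] jmax S by simp
      show ?thesis
      proof (cases "k j = 0")
        case True
        have "Ts k ?S' (axis j (1::'a)) = {}" by (rule Ts_axis_zero[where k=k and j=j, OF True])
        then have e: "card (Hs k S :: ('a poly^'n^'n) set) = card (Hs k ?S' :: ('a poly^'n^'n) set)"
          using rec by simp
        have "?sp S = 0" "?sp ?S' = 0" using jmax True by (auto simp: card_eq_0_iff)
        then show ?thesis using e IHc by (simp add: qprd_0)
      next
        case False
        let ?k' = "k(j := k j - 1)"
        have sk': "sum ?k' UNIV = ?K - 1"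
        proof -
          have "sum k UNIV = k j + sum k (UNIV - {j})" by (rule sum.remove) simp_all
          moreover have "sum ?k' UNIV = ?k' j + sum ?k' (UNIV - {j})" by (rule sum.remove) simp_all
          moreover have "sum ?k' (UNIV - {j}) = sum k (UNIV - {j})" by (rule sum.cong) auto
          ultimately show ?thesis using False by simp
        qed
        have Kpos: "?K \<ge> 1"
        proof -
          have "k j \<le> ?K" by (rule member_le_sum) auto
          then show ?thesis using False by simp
        qed
        have "Ts k ?S' (axis j (1::'a)) = Hs ?k' ?S'"
          by (rule Ts_axis_dec) (use False in auto)
        then have rec2: "real (card (Hs k S :: ('a poly^'n^'n) set)) = real (card (Hs k ?S' :: ('a poly^'n^'n) set))
           - q ^ card ?S' * real (card (Hs ?k' ?S' :: ('a poly^'n^'n) set))"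
          using rec unfolding q_def by (simp add: of_nat_mult of_nat_power)
        have sp': "?S' \<inter> {m. 0 < ?k' m} = ?S' \<inter> {m. 0 < k m}" by auto
        have sz': "?S' \<inter> {m. ?k' m = 0} = ?S' \<inter> {m. k m = 0}" by auto
        have IHk: "real (card (Hs ?k' ?S' :: ('a poly^'n^'n) set)) =
            q ^ ((?N - 1) * (?K - 1)) * qprd q ?N (?sp ?S') (?sz ?S')"
          using IH[of ?k' ?S'] sk' Kpos sp' sz' by simp
        have spS: "?sp S = Suc (?sp ?S')"
        proof -
          have "S \<inter> {m. 0 < k m} = insert j (?S' \<inter> {m. 0 < k m})" using jS False by auto
          then show ?thesis by simp
        qed
        have szS: "?sz S = ?sz ?S'"
        proof -
          have "S \<inter> {m. k m = 0} = ?S' \<inter> {m. k m = 0}" using False by auto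
          then show ?thesis by simp
        qed
        have cS': "card ?S' = ?sp ?S' + ?sz ?S'" by (rule card_split_pos)
        have cc: "?c = q ^ ((?N - 1) * (?K - 1)) * q ^ (?N - 1)"
        proof -
          obtain K'' where K'': "?K = Suc K''" using Kpos by (cases ?K) auto
          have "(?N - 1) * ?K = (?N - 1) * (?K - 1) + (?N - 1)"
            unfolding K'' by simp
          then show ?thesis by (metis power_add)
        qed
        have qN: "q ^ (?N - 1) \<noteq> 0" using qpos by simp
        have alg: "\<And>X c Q P t. Q \<noteq> (0::real) \<Longrightarrow> (X - c*Q*(1 - P)) - t*(c*P) = X - (c*Q)*(1 - P*(1 - t/Q))"
          by (simp add: field_simps)
        show ?thesis
          unfolding rec2 IHc IHk spS szS qprd_Suc cc cS' power_add
          by (rule alg[OF qN])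
      qed
    qed
  qed
  have X: "?X = ?c"
  proof (cases "?K = 0")
    case True
    then have "\<And>j. k j = 0" by simp
    then have "Sk k = {mat 1 :: 'a poly^'n^'n}" by (rule Sk_zero)
    then show ?thesis using True by (simp add: Hs_empty)
  next
    case False
    have "Hs k UNIV = ({} :: ('a poly^'n^'n) set)" by (rule Hs_UNIV) (insert False, linarith)
    then have "0 = ?X - ?c * (1 - qprd q ?N (?sp UNIV) (?sz UNIV))" using A[of UNIV] by simp
    moreover have "qprd q ?N (?sp UNIV) (?sz UNIV) = 0"
    proof (rule qprd_full)
      obtain j where "k j \<noteq> 0" using False by auto
      then have "UNIV \<inter> {m. 0 < k m} \<noteq> {}" by auto
      then show "0 < ?sp UNIV" by (simp add: card_gt_0_iff)
      show "?sp UNIV + ?sz UNIV = ?N" using card_split_pos[of UNIV k] by simp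
      show "q \<noteq> 0" using qpos by simp
    qed
    ultimately show ?thesis by simp
  qed
  show ?thesis using A[of S] X by (simp add: algebra_simps)
qed

lemma count_Hs:
  fixes k :: "'n::finite \<Rightarrow> nat"
  shows "real (card (Hs k S :: ('a::{field,finite} poly^'n^'n) set)) =
       real CARD('a) ^ ((CARD('n) - 1) * sum k UNIV) *
       qprd (real CARD('a)) CARD('n) (card (S \<inter> {m. 0 < k m})) (card (S \<inter> {m. k m = 0}))"
proof (induction "sum k UNIV" arbitrary: k S rule: less_induct)
  case less
  show ?case
    by (rule count_step) (rule less, assumption)
qed

theorem mainTheorem3:
  fixes k :: "'n::finite \<Rightarrow> nat"
  shows "card {A :: ('a::{field,finite}) poly ^'n^'n.
            invertible A \<and>
            (\<forall>i j. degree (A $ i $ j) \<le> k j) \<and>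
            (\<chi> i j. coeff (A $ i $ j) 0) = mat 1}
         = CARD('a) ^ ((CARD('n) - 1) * (\<Sum>i\<in>UNIV. k i))"
proof -
  have "real (card (Sk k :: ('a poly^'n^'n) set)) = real CARD('a) ^ ((CARD('n) - 1) * sum k UNIV)"
    using count_Hs[of k "{}", where 'a='a] by (simp add: Hs_empty qprd_0)
  then have "card (Sk k :: ('a poly^'n^'n) set) = CARD('a) ^ ((CARD('n) - 1) * sum k UNIV)"
    by (metis of_nat_eq_iff of_nat_power)
  then show ?thesis by (simp add: Sk_iff)
qed

end
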